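(* Let $\mathcal{C}$ be a binary linear code of length $n$ with BPSK images $\underline s=(1-2c_0,\dots,1-2c_{n-1})$ of codewords $\underline c$. Let $\underline c^{(0)}$ be the all-zero codeword, and let $\underline c^{(1)},\underline c$ be codewords such that $\underline c^{(0)},\underline c^{(1)},\underline c$ are pairwise distinct, with $d_1=W_H(\underline c^{(1)})$, $i=W_H(\underline c)$, $j=W_H(\underline c-\underline c^{(1)})$. Suppose $\underline s^{(0)}$ is transmitted over the AWGN channel, $\underline y=\underline s^{(0)}+\underline z$ with $\underline z$ having i.i.d. $\mathcal{N}(0,\sigma^2)$ components, $\sigma>0$. Then $$p_3(i,j):={\rm Pr}\big\{(\underline s^{(0)}\to\underline s^{(1)})\cup(\underline s^{(0)}\to\underline s)\big\}=1-\iint_{\Omega}f(\xi_1)f(\xi_2)\,d\xi_1\,d\xi_2,$$ where $f(x)=\frac{1}{\sqrt{2\pi}\sigma}e^{-x^2/(2\sigma^2)}$, $\Omega=\{(\xi_1,\xi_2)\in\mathbb{R}^2:\ \xi_1<\sqrt{d_1},\ \xi_1\cos\theta+\xi_2\sin\theta<\sqrt{i}\}$, and $\theta\in[0,\pi]$ is given by $\cos\theta=(d_1+i-j)/(2\sqrt{d_1 i})$. In particular this probability depends only on $(d_1,i,j)$ and $\sigma$.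
   Context: $W_H$ denotes Hamming weight. For bipolar codewords $\underline s^{(0)},\underline s$, the event $\{\underline s^{(0)}\to\underline s\}$ is $\{\underline y:\|\underline y-\underline s\|\le\|\underline y-\underline s^{(0)}\|\}$ (Euclidean norm in $\mathbb{R}^n$). *)

theory Defs
  imports "HOL-Probability.Probability"
begin

text \<open>Binary words of length n are bool lists (True = bit 1).
  A binary linear code of length n: a GF(2)-subspace of the words of length n.\<close>

definition binary_linear_code :: "nat \<Rightarrow> bool list set \<Rightarrow> bool" where
  "binary_linear_code n C \<longleftrightarrow> C \<subseteq> {c. length c = n} \<and> replicate n False \<in> C \<and>
     (\<forall>a\<in>C. \<forall>b\<in>C. map2 (\<noteq>) a b \<in> C)"

definition gf2_diff :: "bool list \<Rightarrow> bool list \<Rightarrow> bool list" where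
  "gf2_diff a b = map2 (\<noteq>) a b"

definition hamming_weight :: "bool list \<Rightarrow> nat" where
  "hamming_weight c = card {k. k < length c \<and> c ! k}"

definition bpsk :: "bool list \<Rightarrow> nat \<Rightarrow> real" where
  "bpsk c k = 1 - 2 * of_bool (c ! k)"

definition awgn_noise :: "nat \<Rightarrow> real \<Rightarrow> (nat \<Rightarrow> real) measure" where
  "awgn_noise n \<sigma> = PiM {..<n} (\<lambda>_. density lborel (normal_density 0 \<sigma>))"

definition sqdist :: "nat \<Rightarrow> (nat \<Rightarrow> real) \<Rightarrow> (nat \<Rightarrow> real) \<Rightarrow> real" where
  "sqdist n u v = (\<Sum>k<n. (u k - v k)\<^sup>2)"

definition pw_error :: "nat \<Rightarrow> (nat \<Rightarrow> real) \<Rightarrow> (nat \<Rightarrow> real) \<Rightarrow> (nat \<Rightarrow> real) \<Rightarrow> bool" where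
  "pw_error n s0 s y \<longleftrightarrow> sqrt (sqdist n y s) \<le> sqrt (sqdist n y s0)"

definition gauss_pdf :: "real \<Rightarrow> real \<Rightarrow> real" where
  "gauss_pdf \<sigma> x = 1 / (sqrt (2 * pi) * \<sigma>) * exp (- x\<^sup>2 / (2 * \<sigma>\<^sup>2))"

end

theory Submission imports Defs begin

definition gmeas :: "real \<Rightarrow> real measure" where
  "gmeas v = (if v = 0 then return borel 0 else density lborel (\<lambda>x. ennreal (normal_density 0 (sqrt v) x)))"

lemma sets_gmeas[measurable_cong, simp]: "sets (gmeas v) = sets borel"
  by (simp add: gmeas_def)

lemma space_gmeas[simp]: "space (gmeas v) = UNIV"
  by (simp add: gmeas_def)

lemma prob_space_gmeas: "prob_space (gmeas v)"
proof (cases "v = 0")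
  case True then show ?thesis by (simp add: gmeas_def prob_space_return)
next
  case False
  have "normal_density 0 (sqrt v) = normal_density 0 \<bar>sqrt v\<bar>"
    by (simp add: normal_density_def fun_eq_iff)
  then show ?thesis using False prob_space_normal_density[of "\<bar>sqrt v\<bar>" 0] by (simp add: gmeas_def)
qed

lemma emeasure_gmeas_UNIV[simp]: "emeasure (gmeas v) UNIV = 1"
  using prob_space.emeasure_space_1[OF prob_space_gmeas[of v]] by simp

lemma sigma_finite_gmeas: "sigma_finite_measure (gmeas v)"
  using prob_space_gmeas[of v] by (rule prob_space_imp_sigma_finite)

lemma borel_measurable_nn_integral_gmeas[measurable (raw)]:
  "case_prod f \<in> borel_measurable (N \<Otimes>\<^sub>M borel) \<Longrightarrow> (\<lambda>x. \<integral>\<^sup>+ y. f x y \<partial>gmeas v) \<in> borel_measurable N"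
  using sigma_finite_measure.borel_measurable_nn_integral[OF sigma_finite_gmeas[of v], of f N]
  by (simp add: sets_pair_measure_cong[OF refl sets_gmeas[of v]] cong: measurable_cong_sets)

lemma nn_integral_gmeas_const: "(\<integral>\<^sup>+x. c \<partial>gmeas v) = c"
  by simp

lemma nn_integral_gmeas0:
  assumes [measurable]: "g \<in> borel_measurable borel"
  shows "(\<integral>\<^sup>+x. g x \<partial>gmeas 0) = g 0"
  by (simp add: gmeas_def nn_integral_return)

lemma nn_integral_gmeas_pos:
  assumes [measurable]: "g \<in> borel_measurable borel" and v: "v > 0"
  shows "(\<integral>\<^sup>+x. g x \<partial>gmeas v) = (\<integral>\<^sup>+x. ennreal (normal_density 0 (sqrt v) x) * g x \<partial>lborel)"
  using v by (simp add: gmeas_def nn_integral_density)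

lemma gmeas_scale:
  assumes [measurable]: "g \<in> borel_measurable borel" and v: "v \<ge> 0"
  shows "(\<integral>\<^sup>+x. g (k * x) \<partial>gmeas v) = (\<integral>\<^sup>+x. g x \<partial>gmeas (k\<^sup>2 * v))"
proof (cases "v = 0")
  case True then show ?thesis by (simp add: nn_integral_gmeas0)
next
  case False
  then have vp: "v > 0" using v by simp
  show ?thesis
  proof (cases "k = 0")
    case True then show ?thesis by (simp add: nn_integral_gmeas0 nn_integral_gmeas_const)
  next
    case k: False
    have kv: "k\<^sup>2 * v > 0" using k vp by simp
    have eq: "ennreal \<bar>k\<bar> * (ennreal (normal_density 0 (sqrt (k\<^sup>2 * v)) (0 + k * x)) * g (0 + k * x))
       = ennreal (normal_density 0 (sqrt v) x) * g (k * x)" for x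
    proof -
      have "\<bar>k\<bar> * normal_density 0 (sqrt (k\<^sup>2 * v)) (k * x) = normal_density 0 (sqrt v) x"
        using k vp by (simp add: normal_density_def real_sqrt_mult power_mult_distrib real_sqrt_abs field_simps)
      then show ?thesis
        by (simp add: ennreal_mult'[symmetric] mult.assoc[symmetric])
    qed
    have "(\<integral>\<^sup>+x. g x \<partial>gmeas (k\<^sup>2 * v))
        = (\<integral>\<^sup>+x. ennreal (normal_density 0 (sqrt (k\<^sup>2 * v)) x) * g x \<partial>lborel)"
      by (rule nn_integral_gmeas_pos[OF _ kv]) simp
    also have "\<dots> = ennreal \<bar>k\<bar> * (\<integral>\<^sup>+x. ennreal (normal_density 0 (sqrt (k\<^sup>2 * v)) (0 + k * x)) * g (0 + k * x) \<partial>lborel)"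
      by (rule nn_integral_real_affine) (simp_all add: k)
    also have "\<dots> = (\<integral>\<^sup>+x. ennreal \<bar>k\<bar> * (ennreal (normal_density 0 (sqrt (k\<^sup>2 * v)) (0 + k * x)) * g (0 + k * x)) \<partial>lborel)"
      by (rule nn_integral_cmult[symmetric]) simp
    also have "\<dots> = (\<integral>\<^sup>+x. ennreal (normal_density 0 (sqrt v) x) * g (k * x) \<partial>lborel)"
      by (simp only: eq)
    also have "\<dots> = (\<integral>\<^sup>+x. g (k * x) \<partial>gmeas v)"
      by (rule nn_integral_gmeas_pos[OF _ vp, symmetric]) simp
    finally show ?thesis ..
  qed
qed


lemma quad_identity:
  fixes a b x u s :: real assumes a: "a > 0" and b: "b > 0" and s: "s = a + b"
  shows "u\<^sup>2 / a + (x - u)\<^sup>2 / b = x\<^sup>2 / s + (s * u - a * x)\<^sup>2 / (a * b * s)"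
proof -
  have sp: "s > 0" using a b s by simp
  have "u\<^sup>2 / a + (x - u)\<^sup>2 / b = (u\<^sup>2 * b * s + (x - u)\<^sup>2 * a * s) / (a * b * s)"
    using a b sp by (simp add: field_simps)
  also have "u\<^sup>2 * b * s + (x - u)\<^sup>2 * a * s = x\<^sup>2 * a * b + (s * u - a * x)\<^sup>2"
    unfolding s by (simp add: power2_eq_square algebra_simps)
  also have "(x\<^sup>2 * a * b + (s * u - a * x)\<^sup>2) / (a * b * s) = x\<^sup>2 / s + (s * u - a * x)\<^sup>2 / (a * b * s)"
    using a b sp by (simp add: field_simps)
  finally show ?thesis .
qed

lemma nd_sqrt: "v \<ge> 0 \<Longrightarrow> normal_density 0 (sqrt v) x = 1 / sqrt (2 * pi * v) * exp (- x\<^sup>2 / (2 * v))"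
  by (simp add: normal_density_def)

lemma nd_identity:
  fixes a b x u :: real
  assumes a: "a > 0" and b: "b > 0"
  shows "normal_density 0 (sqrt a) u * normal_density 0 (sqrt b) (x - u)
       = normal_density 0 (sqrt (a + b)) x * normal_density 0 (sqrt (a * b / (a + b))) (u - a / (a + b) * x)"
proof -
  define s where "s = a + b"
  define c where "c = a * b / (a + b)"
  have s: "s > 0" using a b by (simp add: s_def)
  have c: "c > 0" using a b by (simp add: c_def)
  have cs: "c * s = a * b" using a b by (simp add: c_def s_def)
  have e: "- u\<^sup>2 / (2 * a) + - (x - u)\<^sup>2 / (2 * b) = - x\<^sup>2 / (2 * s) + - (u - a / s * x)\<^sup>2 / (2 * c)"
  proof -
    have q: "(u - a / s * x)\<^sup>2 / c = (s * u - a * x)\<^sup>2 / (a * b * s)"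
      using a b s unfolding c_def s_def[symmetric] by (simp add: field_simps power2_eq_square)
    have "- u\<^sup>2 / (2 * a) + - (x - u)\<^sup>2 / (2 * b) = - (u\<^sup>2 / a + (x - u)\<^sup>2 / b) / 2"
      by (simp add: field_simps)
    also have "\<dots> = - (x\<^sup>2 / s + (u - a / s * x)\<^sup>2 / c) / 2"
      using quad_identity[OF a b s_def] q by simp
    also have "\<dots> = - x\<^sup>2 / (2 * s) + - (u - a / s * x)\<^sup>2 / (2 * c)"
      by (simp add: field_simps)
    finally show ?thesis .
  qed
  have sq: "sqrt (2 * pi * a) * sqrt (2 * pi * b) = sqrt (2 * pi * s) * sqrt (2 * pi * c)"
    by (simp add: real_sqrt_mult[symmetric] cs algebra_simps)
  have "normal_density 0 (sqrt a) u * normal_density 0 (sqrt b) (x - u)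
      = 1 / (sqrt (2 * pi * a) * sqrt (2 * pi * b)) * exp (- u\<^sup>2 / (2 * a) + - (x - u)\<^sup>2 / (2 * b))"
    using a b by (simp add: nd_sqrt mult_exp_exp)
  also have "\<dots> = 1 / (sqrt (2 * pi * s) * sqrt (2 * pi * c)) * exp (- x\<^sup>2 / (2 * s) + - (u - a / s * x)\<^sup>2 / (2 * c))"
    by (simp only: e sq)
  also have "\<dots> = normal_density 0 (sqrt s) x * normal_density 0 (sqrt c) (u - a / s * x)"
    using s c by (simp add: nd_sqrt mult_exp_exp)
  finally show ?thesis by (simp add: s_def c_def)
qed

lemma gmeas_shear_pos:
  fixes f :: "real \<Rightarrow> real \<Rightarrow> ennreal"
  assumes a: "a > 0" and b: "b > 0"
    and f[measurable]: "case_prod f \<in> borel_measurable (borel \<Otimes>\<^sub>M borel)"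
  shows "(\<integral>\<^sup>+u. \<integral>\<^sup>+v. f (u + v) u \<partial>gmeas b \<partial>gmeas a)
       = (\<integral>\<^sup>+t. \<integral>\<^sup>+r. f t (a / (a + b) * t + r) \<partial>gmeas (a * b / (a + b)) \<partial>gmeas (a + b))"
proof -
  define s where "s = a + b"
  define c where "c = a * b / (a + b)"
  define k where "k = a / (a + b)"
  have s: "s > 0" using a b by (simp add: s_def)
  have c: "c > 0" using a b by (simp add: c_def)
  let ?n = "\<lambda>v x. ennreal (normal_density 0 (sqrt v) x)"
  have "(\<integral>\<^sup>+u. \<integral>\<^sup>+v. f (u + v) u \<partial>gmeas b \<partial>gmeas a)
      = (\<integral>\<^sup>+u. ?n a u * (\<integral>\<^sup>+v. ?n b v * f (u + v) u \<partial>lborel) \<partial>lborel)"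
    using a b by (simp add: nn_integral_gmeas_pos)
  also have "\<dots> = (\<integral>\<^sup>+u. ?n a u * (\<integral>\<^sup>+x. ?n b (x - u) * f x u \<partial>lborel) \<partial>lborel)"
  proof (rule nn_integral_cong)
    fix u
    have "(\<integral>\<^sup>+x. ?n b (x - u) * f x u \<partial>lborel) = ennreal \<bar>1\<bar> * (\<integral>\<^sup>+x. ?n b (u + 1 * x - u) * f (u + 1 * x) u \<partial>lborel)"
      by (rule nn_integral_real_affine) simp_all
    then show "?n a u * (\<integral>\<^sup>+v. ?n b v * f (u + v) u \<partial>lborel) = ?n a u * (\<integral>\<^sup>+x. ?n b (x - u) * f x u \<partial>lborel)"
      by simp
  qed
  also have "\<dots> = (\<integral>\<^sup>+u. \<integral>\<^sup>+x. ?n a u * ?n b (x - u) * f x u \<partial>lborel \<partial>lborel)"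
    by (subst nn_integral_cmult[symmetric]) (simp_all add: mult.assoc)
  also have "\<dots> = (\<integral>\<^sup>+x. \<integral>\<^sup>+u. ?n a u * ?n b (x - u) * f x u \<partial>lborel \<partial>lborel)"
    by (rule lborel_pair.Fubini') simp
  also have "\<dots> = (\<integral>\<^sup>+x. \<integral>\<^sup>+u. ?n s x * ?n c (u - k * x) * f x u \<partial>lborel \<partial>lborel)"
    using nd_identity[OF a b] by (simp add: s_def c_def k_def ennreal_mult'[symmetric])
  also have "\<dots> = (\<integral>\<^sup>+t. ?n s t * (\<integral>\<^sup>+r. ?n c r * f t (k * t + r) \<partial>lborel) \<partial>lborel)"
  proof (rule nn_integral_cong)
    fix t
    have "(\<integral>\<^sup>+u. ?n c (u - k * t) * f t u \<partial>lborel) = ennreal \<bar>1\<bar> * (\<integral>\<^sup>+r. ?n c (k * t + 1 * r - k * t) * f t (k * t + 1 * r) \<partial>lborel)"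
      by (rule nn_integral_real_affine) simp_all
    moreover have "(\<integral>\<^sup>+u. ?n s t * ?n c (u - k * t) * f t u \<partial>lborel) = ?n s t * (\<integral>\<^sup>+u. ?n c (u - k * t) * f t u \<partial>lborel)"
      by (simp add: mult.assoc nn_integral_cmult)
    ultimately show "(\<integral>\<^sup>+u. ?n s t * ?n c (u - k * t) * f t u \<partial>lborel) = ?n s t * (\<integral>\<^sup>+r. ?n c r * f t (k * t + r) \<partial>lborel)"
      by simp
  qed
  also have "\<dots> = (\<integral>\<^sup>+t. \<integral>\<^sup>+r. f t (k * t + r) \<partial>gmeas c \<partial>gmeas s)"
    using s c by (simp add: nn_integral_gmeas_pos)
  finally show ?thesis by (simp add: s_def c_def k_def)
qed


lemma gmeas_shear:
  fixes f :: "real \<Rightarrow> real \<Rightarrow> ennreal"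
  assumes a: "a \<ge> 0" and b: "b \<ge> 0"
    and f[measurable]: "case_prod f \<in> borel_measurable (borel \<Otimes>\<^sub>M borel)"
  shows "(\<integral>\<^sup>+u. \<integral>\<^sup>+v. f (u + v) u \<partial>gmeas b \<partial>gmeas a)
       = (\<integral>\<^sup>+t. \<integral>\<^sup>+r. f t (a / (a + b) * t + r) \<partial>gmeas (a * b / (a + b)) \<partial>gmeas (a + b))"
proof (cases "a = 0")
  case True
  then show ?thesis by (simp add: nn_integral_gmeas0)
next
  case False
  then have ap: "a > 0" using a by simp
  show ?thesis
  proof (cases "b = 0")
    case True
    then show ?thesis using ap by (simp add: nn_integral_gmeas0)
  next
    case False
    then show ?thesis using gmeas_shear_pos[OF ap _ f] b by simp
  qed
qed

lemma gmeas_conv: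
  fixes g :: "real \<Rightarrow> ennreal"
  assumes a: "a \<ge> 0" and b: "b \<ge> 0" and [measurable]: "g \<in> borel_measurable borel"
  shows "(\<integral>\<^sup>+u. \<integral>\<^sup>+v. g (u + v) \<partial>gmeas b \<partial>gmeas a) = (\<integral>\<^sup>+t. g t \<partial>gmeas (a + b))"
  using gmeas_shear[OF a b, of "\<lambda>x y. g x"] by (simp add: nn_integral_gmeas_const)


abbreviation PG :: "nat set \<Rightarrow> real \<Rightarrow> (nat \<Rightarrow> real) measure" where
  "PG I v \<equiv> PiM I (\<lambda>_. gmeas v)"

lemma psf_gmeas: "product_sigma_finite (\<lambda>_. gmeas v)"
  unfolding product_sigma_finite_def using sigma_finite_gmeas by blast

lemma prob_space_PG: "prob_space (PG I v)"
  by (rule prob_space_PiM) (simp add: prob_space_gmeas)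

lemma emeasure_PG_space[simp]: "emeasure (PG I v) (space (PG I v)) = 1"
  using prob_space.emeasure_space_1[OF prob_space_PG] by simp

lemma nn_integral_PG_const: "(\<integral>\<^sup>+x. c \<partial>PG I v) = c"
proof -
  interpret prob_space "PG I v" by (rule prob_space_PG)
  show ?thesis by (simp add: emeasure_space_1)
qed

lemma meas_sum_PG[measurable]:
  assumes "S \<subseteq> I"
  shows "(\<lambda>z. \<Sum>k\<in>S. z k) \<in> borel_measurable (PG I v)"
proof (rule borel_measurable_sum)
  fix k assume "k \<in> S"
  then have "k \<in> I" using assms by auto
  then have "(\<lambda>z. z k) \<in> measurable (PG I v) (gmeas v)" by (rule measurable_component_singleton)
  then show "(\<lambda>z. z k) \<in> borel_measurable (PG I v)" by (simp cong: measurable_cong_sets)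
qed

lemma sumlaw:
  assumes "finite S" and v: "v \<ge> 0" and [measurable]: "g \<in> borel_measurable borel"
  shows "(\<integral>\<^sup>+x. g (\<Sum>k\<in>S. x k) \<partial>PG S v) = (\<integral>\<^sup>+t. g t \<partial>gmeas (real (card S) * v))"
  using assms(1) assms(3)
proof (induction S arbitrary: g rule: finite_induct)
  case empty
  interpret product_sigma_finite "\<lambda>_. gmeas v" by (rule psf_gmeas)
  show ?case using nn_integral_gmeas0[OF empty] by (simp add: nn_integral_empty)
next
  case (insert k S)
  interpret product_sigma_finite "\<lambda>_. gmeas v" by (rule psf_gmeas)
  note [measurable] = insert.prems
  have "(\<integral>\<^sup>+x. g (\<Sum>j\<in>insert k S. x j) \<partial>PG (insert k S) v)
      = (\<integral>\<^sup>+y. \<integral>\<^sup>+x. g (\<Sum>j\<in>insert k S. (x(k := y)) j) \<partial>PG S v \<partial>gmeas v)"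
    by (rule product_nn_integral_insert_rev) (use insert in auto)
  also have "\<dots> = (\<integral>\<^sup>+y. \<integral>\<^sup>+x. g (y + (\<Sum>j\<in>S. x j)) \<partial>PG S v \<partial>gmeas v)"
  proof -
    have eq: "(\<Sum>j\<in>insert k S. (x(k := y)) j) = y + (\<Sum>j\<in>S. x j)" for x y
    proof -
      have "(\<Sum>j\<in>S. (x(k := y)) j) = (\<Sum>j\<in>S. x j)"
        using insert.hyps(2) by (intro sum.cong) auto
      then show ?thesis using insert.hyps by simp
    qed
    show ?thesis by (simp only: eq)
  qed
  also have "\<dots> = (\<integral>\<^sup>+y. \<integral>\<^sup>+t. g (y + t) \<partial>gmeas (real (card S) * v) \<partial>gmeas v)"
    by (intro nn_integral_cong insert.IH) simp
  also have "\<dots> = (\<integral>\<^sup>+t. g t \<partial>gmeas (v + real (card S) * v))"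
    by (rule gmeas_conv) (use v in auto)
  finally show ?case using insert by (simp add: algebra_simps)
qed

lemma sumlaw_sub:
  assumes "finite I" "S \<subseteq> I" and v: "v \<ge> 0" and [measurable]: "g \<in> borel_measurable borel"
  shows "(\<integral>\<^sup>+x. g (\<Sum>k\<in>S. x k) \<partial>PG I v) = (\<integral>\<^sup>+t. g t \<partial>gmeas (real (card S) * v))"
proof -
  interpret product_sigma_finite "\<lambda>_. gmeas v" by (rule psf_gmeas)
  have fS: "finite S" using assms finite_subset by blast
  have I: "I = S \<union> (I - S)" using assms by auto
  have "(\<integral>\<^sup>+x. g (\<Sum>k\<in>S. x k) \<partial>PG I v) = (\<integral>\<^sup>+x. g (\<Sum>k\<in>S. x k) \<partial>PG (S \<union> (I - S)) v)"
    using I by simp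
  also have "\<dots> = (\<integral>\<^sup>+x. \<integral>\<^sup>+y. g (\<Sum>k\<in>S. merge S (I - S) (x, y) k) \<partial>PG (I - S) v \<partial>PG S v)"
    by (rule product_nn_integral_fold) (use assms fS in auto)
  also have "\<dots> = (\<integral>\<^sup>+x. g (\<Sum>k\<in>S. x k) \<partial>PG S v)"
  proof -
    have "(\<Sum>k\<in>S. merge S (I - S) (x, y) k) = (\<Sum>k\<in>S. x k)" for x y
      by (intro sum.cong) auto
    then show ?thesis by (simp add: nn_integral_PG_const)
  qed
  also have "\<dots> = (\<integral>\<^sup>+t. g t \<partial>gmeas (real (card S) * v))"
    by (rule sumlaw) (use fS v in auto)
  finally show ?thesis .
qed

lemma pairlaw:
  fixes h :: "real \<Rightarrow> real \<Rightarrow> ennreal"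
  assumes I: "finite I" "S2 \<subseteq> I" "S3 \<subseteq> I" "S2 \<inter> S3 = {}" and v: "v \<ge> 0"
    and h[measurable]: "case_prod h \<in> borel_measurable (borel \<Otimes>\<^sub>M borel)"
  shows "(\<integral>\<^sup>+z. h (\<Sum>k\<in>S2. z k) (\<Sum>k\<in>S3. z k) \<partial>PG I v)
       = (\<integral>\<^sup>+p. \<integral>\<^sup>+q. h p q \<partial>gmeas (real (card S3) * v) \<partial>gmeas (real (card S2) * v))"
proof -
  interpret product_sigma_finite "\<lambda>_. gmeas v" by (rule psf_gmeas)
  have fS: "finite S2" using I finite_subset by blast
  have II: "I = S2 \<union> (I - S2)" using I by auto
  have s3: "S3 \<subseteq> I - S2" using I by auto
  have m1[measurable]: "(\<lambda>z. \<Sum>k\<in>S2. z k) \<in> borel_measurable (PG (S2 \<union> (I - S2)) v)"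
    by (rule meas_sum_PG) auto
  have m2[measurable]: "(\<lambda>z. \<Sum>k\<in>S3. z k) \<in> borel_measurable (PG (S2 \<union> (I - S2)) v)"
    by (rule meas_sum_PG) (use I in auto)
  have mh: "(\<lambda>z. h (\<Sum>k\<in>S2. z k) (\<Sum>k\<in>S3. z k)) \<in> borel_measurable (PG (S2 \<union> (I - S2)) v)"
  proof -
    have "(\<lambda>z. ((\<Sum>k\<in>S2. z k), (\<Sum>k\<in>S3. z k))) \<in> measurable (PG (S2 \<union> (I - S2)) v) (borel \<Otimes>\<^sub>M borel)"
      by measurable
    from measurable_compose[OF this h] show ?thesis by simp
  qed
  have "(\<integral>\<^sup>+z. h (\<Sum>k\<in>S2. z k) (\<Sum>k\<in>S3. z k) \<partial>PG I v)
     = (\<integral>\<^sup>+z. h (\<Sum>k\<in>S2. z k) (\<Sum>k\<in>S3. z k) \<partial>PG (S2 \<union> (I - S2)) v)"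
    using II by simp
  also have "\<dots> = (\<integral>\<^sup>+x. \<integral>\<^sup>+y. h (\<Sum>k\<in>S2. merge S2 (I - S2) (x, y) k) (\<Sum>k\<in>S3. merge S2 (I - S2) (x, y) k)
        \<partial>PG (I - S2) v \<partial>PG S2 v)"
    by (rule product_nn_integral_fold[OF _ _ _ mh]) (use I fS in auto)
  also have "\<dots> = (\<integral>\<^sup>+x. \<integral>\<^sup>+y. h (\<Sum>k\<in>S2. x k) (\<Sum>k\<in>S3. y k) \<partial>PG (I - S2) v \<partial>PG S2 v)"
  proof -
    have e1: "(\<Sum>k\<in>S2. merge S2 (I - S2) (x, y) k) = (\<Sum>k\<in>S2. x k)" for x y
      by (intro sum.cong) auto
    have e2: "(\<Sum>k\<in>S3. merge S2 (I - S2) (x, y) k) = (\<Sum>k\<in>S3. y k)" for x y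
      using s3 by (intro sum.cong) auto
    show ?thesis by (simp only: e1 e2)
  qed
  also have "\<dots> = (\<integral>\<^sup>+x. \<integral>\<^sup>+q. h (\<Sum>k\<in>S2. x k) q \<partial>gmeas (real (card S3) * v) \<partial>PG S2 v)"
    by (intro nn_integral_cong sumlaw_sub) (use I s3 v in auto)
  also have "\<dots> = (\<integral>\<^sup>+p. \<integral>\<^sup>+q. h p q \<partial>gmeas (real (card S3) * v) \<partial>gmeas (real (card S2) * v))"
    by (rule sumlaw[where g="\<lambda>p. \<integral>\<^sup>+q. h p q \<partial>gmeas (real (card S3) * v)"]) (use fS v in auto)
  finally show ?thesis .
qed

lemma triplelaw:
  fixes h :: "real \<Rightarrow> real \<Rightarrow> real \<Rightarrow> ennreal"
  assumes I: "finite I" "S1 \<subseteq> I" "S2 \<subseteq> I" "S3 \<subseteq> I" "S1 \<inter> S2 = {}" "S1 \<inter> S3 = {}" "S2 \<inter> S3 = {}"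
    and v: "v \<ge> 0"
    and h[measurable]: "(\<lambda>(u, p, q). h u p q) \<in> borel_measurable (borel \<Otimes>\<^sub>M (borel \<Otimes>\<^sub>M borel))"
  shows "(\<integral>\<^sup>+z. h (\<Sum>k\<in>S1. z k) (\<Sum>k\<in>S2. z k) (\<Sum>k\<in>S3. z k) \<partial>PG I v)
       = (\<integral>\<^sup>+u. \<integral>\<^sup>+p. \<integral>\<^sup>+q. h u p q \<partial>gmeas (real (card S3) * v) \<partial>gmeas (real (card S2) * v)
            \<partial>gmeas (real (card S1) * v))"
proof -
  interpret product_sigma_finite "\<lambda>_. gmeas v" by (rule psf_gmeas)
  have fS: "finite S1" using I finite_subset by blast
  have II: "I = S1 \<union> (I - S1)" using I by auto
  have s2: "S2 \<subseteq> I - S1" and s3: "S3 \<subseteq> I - S1" using I by auto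
  have m1[measurable]: "(\<lambda>z. \<Sum>k\<in>S1. z k) \<in> borel_measurable (PG (S1 \<union> (I - S1)) v)"
    by (rule meas_sum_PG) auto
  have m2[measurable]: "(\<lambda>z. \<Sum>k\<in>S2. z k) \<in> borel_measurable (PG (S1 \<union> (I - S1)) v)"
    by (rule meas_sum_PG) (use I in auto)
  have m3[measurable]: "(\<lambda>z. \<Sum>k\<in>S3. z k) \<in> borel_measurable (PG (S1 \<union> (I - S1)) v)"
    by (rule meas_sum_PG) (use I in auto)
  have mh: "(\<lambda>z. h (\<Sum>k\<in>S1. z k) (\<Sum>k\<in>S2. z k) (\<Sum>k\<in>S3. z k)) \<in> borel_measurable (PG (S1 \<union> (I - S1)) v)"
  proof -
    have "(\<lambda>z. ((\<Sum>k\<in>S1. z k), (\<Sum>k\<in>S2. z k), (\<Sum>k\<in>S3. z k))) \<in> measurable (PG (S1 \<union> (I - S1)) v) (borel \<Otimes>\<^sub>M (borel \<Otimes>\<^sub>M borel))"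
      by measurable
    from measurable_compose[OF this h] show ?thesis by simp
  qed
  have "(\<integral>\<^sup>+z. h (\<Sum>k\<in>S1. z k) (\<Sum>k\<in>S2. z k) (\<Sum>k\<in>S3. z k) \<partial>PG I v)
     = (\<integral>\<^sup>+z. h (\<Sum>k\<in>S1. z k) (\<Sum>k\<in>S2. z k) (\<Sum>k\<in>S3. z k) \<partial>PG (S1 \<union> (I - S1)) v)"
    using II by simp
  also have "\<dots> = (\<integral>\<^sup>+x. \<integral>\<^sup>+y. h (\<Sum>k\<in>S1. merge S1 (I - S1) (x, y) k) (\<Sum>k\<in>S2. merge S1 (I - S1) (x, y) k)
        (\<Sum>k\<in>S3. merge S1 (I - S1) (x, y) k) \<partial>PG (I - S1) v \<partial>PG S1 v)"
    by (rule product_nn_integral_fold[OF _ _ _ mh]) (use I fS in auto)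
  also have "\<dots> = (\<integral>\<^sup>+x. \<integral>\<^sup>+y. h (\<Sum>k\<in>S1. x k) (\<Sum>k\<in>S2. y k) (\<Sum>k\<in>S3. y k) \<partial>PG (I - S1) v \<partial>PG S1 v)"
  proof -
    have e1: "(\<Sum>k\<in>S1. merge S1 (I - S1) (x, y) k) = (\<Sum>k\<in>S1. x k)" for x y
      by (intro sum.cong) auto
    have e2: "(\<Sum>k\<in>S2. merge S1 (I - S1) (x, y) k) = (\<Sum>k\<in>S2. y k)" for x y
      using s2 by (intro sum.cong) auto
    have e3: "(\<Sum>k\<in>S3. merge S1 (I - S1) (x, y) k) = (\<Sum>k\<in>S3. y k)" for x y
      using s3 by (intro sum.cong) auto
    show ?thesis by (simp only: e1 e2 e3)
  qed
  also have "\<dots> = (\<integral>\<^sup>+x. \<integral>\<^sup>+p. \<integral>\<^sup>+q. h (\<Sum>k\<in>S1. x k) p q \<partial>gmeas (real (card S3) * v) \<partial>gmeas (real (card S2) * v) \<partial>PG S1 v)"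
    by (intro nn_integral_cong pairlaw) (use I s2 s3 v in auto)
  also have "\<dots> = (\<integral>\<^sup>+u. \<integral>\<^sup>+p. \<integral>\<^sup>+q. h u p q \<partial>gmeas (real (card S3) * v) \<partial>gmeas (real (card S2) * v)
            \<partial>gmeas (real (card S1) * v))"
  proof (rule sumlaw[where g="\<lambda>u. \<integral>\<^sup>+p. \<integral>\<^sup>+q. h u p q \<partial>gmeas (real (card S3) * v) \<partial>gmeas (real (card S2) * v)"])
    have "(\<lambda>x. (fst (fst x), snd (fst x), snd x)) \<in> measurable ((borel \<Otimes>\<^sub>M borel) \<Otimes>\<^sub>M borel) (borel \<Otimes>\<^sub>M (borel \<Otimes>\<^sub>M borel))"
      by measurable
    from measurable_compose[OF this h]
    have ha: "case_prod (\<lambda>x q. h (fst x) (snd x) q) \<in> borel_measurable ((borel \<Otimes>\<^sub>M borel) \<Otimes>\<^sub>M borel)"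
      by (simp add: case_prod_beta')
    have hb: "(\<lambda>x. \<integral>\<^sup>+q. h (fst x) (snd x) q \<partial>gmeas (real (card S3) * v)) \<in> borel_measurable (borel \<Otimes>\<^sub>M borel)"
      using borel_measurable_nn_integral_gmeas[OF ha] .
    then have "case_prod (\<lambda>u p. \<integral>\<^sup>+q. h u p q \<partial>gmeas (real (card S3) * v)) \<in> borel_measurable (borel \<Otimes>\<^sub>M borel)"
      by (simp add: case_prod_beta')
    from borel_measurable_nn_integral_gmeas[OF this]
    show "(\<lambda>u. \<integral>\<^sup>+p. \<integral>\<^sup>+q. h u p q \<partial>gmeas (real (card S3) * v) \<partial>gmeas (real (card S2) * v)) \<in> borel_measurable borel" .
  qed (use fS v in auto)
  finally show ?thesis .
qed


lemma core:
  fixes a b w :: nat and v c s :: real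
  assumes d: "a + b > 0" and e: "a + w > 0" and v: "v > 0"
    and c: "c = real a / sqrt (real (a + b) * real (a + w))"
    and s: "s \<ge> 0" "s\<^sup>2 = 1 - c\<^sup>2"
  shows "(\<integral>\<^sup>+u. \<integral>\<^sup>+p. \<integral>\<^sup>+q. indicator {x. x > - real (a + b)} (u + p) * indicator {x. x > - real (a + w)} (u + q)
            \<partial>gmeas (real w * v) \<partial>gmeas (real b * v) \<partial>gmeas (real a * v))
       = (\<integral>\<^sup>+x. \<integral>\<^sup>+y. indicator {x. x < sqrt (real (a + b))} x * indicator {z. z < sqrt (real (a + w))} (x * c + y * s)
            \<partial>gmeas v \<partial>gmeas v)"
proof -
  define D where "D = real (a + b)"
  define E where "E = real (a + w)"
  define A where "A = {x::real. x > - D}"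
  define B where "B = {x::real. x > - E}"
  define \<kappa> where "\<kappa> = real a / D"
  have Dp: "D > 0" and Ep: "E > 0" using d e unfolding D_def E_def by (simp_all only: of_nat_0_less_iff)
  have [measurable]: "A \<in> sets borel" "B \<in> sets borel" by (simp_all add: A_def B_def)
  define \<phi> where "\<phi> u = (\<integral>\<^sup>+q. indicator B (u + q) \<partial>gmeas (real w * v))" for u
  have [measurable]: "\<phi> \<in> borel_measurable borel" unfolding \<phi>_def by measurable
  have "(\<integral>\<^sup>+u. \<integral>\<^sup>+p. \<integral>\<^sup>+q. indicator A (u + p) * indicator B (u + q)
            \<partial>gmeas (real w * v) \<partial>gmeas (real b * v) \<partial>gmeas (real a * v))
      = (\<integral>\<^sup>+u. \<integral>\<^sup>+p. indicator A (u + p) * \<phi> u \<partial>gmeas (real b * v) \<partial>gmeas (real a * v))"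
    unfolding \<phi>_def by (simp add: nn_integral_cmult)
  also have "\<dots> = (\<integral>\<^sup>+t. \<integral>\<^sup>+r. indicator A t * \<phi> (real a * v / (real a * v + real b * v) * t + r)
        \<partial>gmeas (real a * v * (real b * v) / (real a * v + real b * v)) \<partial>gmeas (real a * v + real b * v))"
    by (rule gmeas_shear[where f="\<lambda>t u. indicator A t * \<phi> u"]) (use v in auto)
  also have "\<dots> = (\<integral>\<^sup>+t. indicator A t * (\<integral>\<^sup>+r. \<phi> (\<kappa> * t + r) \<partial>gmeas (real a * real b * v / D))
        \<partial>gmeas (D * v))"
  proof -
    have 3: "real a * v + real b * v = D * v" by (simp add: D_def algebra_simps)
    have 1: "real a * v / (D * v) = \<kappa>" using v Dp
      unfolding \<kappa>_def by simp
    have 2: "real a * v * (real b * v) / (D * v) = real a * real b * v / D" using v Dp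
      by (simp add: field_simps)
    show ?thesis
      apply (simp only: 3)
      apply (simp only: 1 2)
      apply (intro nn_integral_cong)
      apply (rule nn_integral_cmult)
      apply measurable
      done
  qed
  also have "\<dots> = (\<integral>\<^sup>+t. indicator A t * (\<integral>\<^sup>+m. indicator B (\<kappa> * t + m) \<partial>gmeas (real a * real b * v / D + real w * v))
        \<partial>gmeas (D * v))"
  proof (rule nn_integral_cong)
    fix t
    have "(\<integral>\<^sup>+r. \<phi> (\<kappa> * t + r) \<partial>gmeas (real a * real b * v / D))
        = (\<integral>\<^sup>+r. \<integral>\<^sup>+q. indicator B (\<kappa> * t + (r + q)) \<partial>gmeas (real w * v) \<partial>gmeas (real a * real b * v / D))"
      unfolding \<phi>_def by (simp add: add.assoc)
    also have "\<dots> = (\<integral>\<^sup>+m. indicator B (\<kappa> * t + m) \<partial>gmeas (real a * real b * v / D + real w * v))"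
      by (rule gmeas_conv) (use v Dp in auto)
    finally show "indicator A t * (\<integral>\<^sup>+r. \<phi> (\<kappa> * t + r) \<partial>gmeas (real a * real b * v / D))
       = indicator A t * (\<integral>\<^sup>+m. indicator B (\<kappa> * t + m) \<partial>gmeas (real a * real b * v / D + real w * v))"
      by simp
  qed
  also have "\<dots> = (\<integral>\<^sup>+t. indicator {x. x < sqrt D} (- 1 / sqrt D * t) *
        (\<integral>\<^sup>+y. indicator {z. z < sqrt E} ((- 1 / sqrt D * t) * c + y * s) \<partial>gmeas v) \<partial>gmeas (D * v))"
  proof (rule nn_integral_cong)
    fix t
    have i1: "indicator A t = (indicator {x. x < sqrt D} (- 1 / sqrt D * t) :: ennreal)"
    proof -
      have "(t > - D) \<longleftrightarrow> (- 1 / sqrt D * t < sqrt D)"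
        using Dp by (simp add: field_simps) linarith
      then show ?thesis by (simp add: A_def indicator_def)
    qed
    have i2: "(\<integral>\<^sup>+m. indicator B (\<kappa> * t + m) \<partial>gmeas (real a * real b * v / D + real w * v))
        = (\<integral>\<^sup>+y. indicator {z. z < sqrt E} ((- 1 / sqrt D * t) * c + y * s) \<partial>gmeas v)"
    proof -
      have "(\<integral>\<^sup>+y. indicator B (\<kappa> * t + (- sqrt E * s) * y) \<partial>gmeas v)
          = (\<integral>\<^sup>+m. indicator B (\<kappa> * t + m) \<partial>gmeas ((- sqrt E * s)\<^sup>2 * v))"
        by (rule gmeas_scale[where g="\<lambda>m. indicator B (\<kappa> * t + m)"]) (use v in auto)
      moreover have "(- sqrt E * s)\<^sup>2 * v = real a * real b * v / D + real w * v"
      proof -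
        have "(- sqrt E * s)\<^sup>2 = E * (1 - c\<^sup>2)" using Ep s by (simp add: power_mult_distrib)
        also have "c\<^sup>2 = (real a)\<^sup>2 / (D * E)"
          using Dp Ep by (simp add: c D_def E_def power_divide real_sqrt_mult power_mult_distrib)
        finally have "(- sqrt E * s)\<^sup>2 = E - (real a)\<^sup>2 / D" using Ep by (simp add: field_simps)
        also have "\<dots> = real a * real b / D + real w"
          using Dp by (simp add: D_def E_def field_simps power2_eq_square)
        finally show ?thesis by (simp add: algebra_simps add_divide_distrib)
      qed
      moreover have "indicator B (\<kappa> * t + (- sqrt E * s) * y)
          = (indicator {z. z < sqrt E} ((- 1 / sqrt D * t) * c + y * s) :: ennreal)" for y
      proof -
        have c': "c = real a / (sqrt D * sqrt E)" by (simp add: c D_def E_def real_sqrt_mult)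
        have sD: "sqrt D * sqrt D = D" using Dp by simp
        have "sqrt E * (1 / sqrt D) * c = real a * sqrt E / (sqrt D * sqrt D * sqrt E)"
          by (simp add: c' field_simps)
        also have "\<dots> = real a / D" using Dp Ep by (simp add: sD)
        finally have kc: "\<kappa> = sqrt E * (1 / sqrt D) * c" by (simp add: \<kappa>_def)
        have "\<kappa> * t + (- sqrt E * s) * y = - sqrt E * ((- 1 / sqrt D * t) * c + y * s)"
          by (simp add: kc algebra_simps)
        moreover have "(- sqrt E * X > - E) \<longleftrightarrow> (X < sqrt E)" for X
        proof -
          have "E = sqrt E * sqrt E" using Ep by simp
          then have "(- sqrt E * X > - E) \<longleftrightarrow> (sqrt E * X < sqrt E * sqrt E)" by linarith
          also have "\<dots> \<longleftrightarrow> X < sqrt E" by (rule mult_less_cancel_left_pos) (use Ep in simp)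
          finally show ?thesis .
        qed
        ultimately show ?thesis by (simp add: B_def indicator_def)
      qed
      ultimately show ?thesis by simp
    qed
    show "indicator A t * (\<integral>\<^sup>+m. indicator B (\<kappa> * t + m) \<partial>gmeas (real a * real b * v / D + real w * v))
        = indicator {x. x < sqrt D} (- 1 / sqrt D * t) *
        (\<integral>\<^sup>+y. indicator {z. z < sqrt E} ((- 1 / sqrt D * t) * c + y * s) \<partial>gmeas v)"
      by (simp only: i1 i2)
  qed
  also have "\<dots> = (\<integral>\<^sup>+x. indicator {x. x < sqrt D} x *
        (\<integral>\<^sup>+y. indicator {z. z < sqrt E} (x * c + y * s) \<partial>gmeas v) \<partial>gmeas ((- 1 / sqrt D)\<^sup>2 * (D * v)))"
    by (rule gmeas_scale[where g="\<lambda>x. indicator {x. x < sqrt D} x *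
        (\<integral>\<^sup>+y. indicator {z. z < sqrt E} (x * c + y * s) \<partial>gmeas v)"]) (use v Dp in auto)
  also have "(- 1 / sqrt D)\<^sup>2 * (D * v) = v" using Dp by (simp add: power_divide)
  finally show ?thesis by (simp add: A_def B_def D_def E_def nn_integral_cmult)
qed


lemma pw_error_iff:
  fixes z :: "nat \<Rightarrow> real"
  assumes "length c1 = n"
  shows "pw_error n (bpsk (replicate n False)) (bpsk c1) (\<lambda>k. bpsk (replicate n False) k + z k)
     \<longleftrightarrow> (\<Sum>k\<in>{k. k < n \<and> c1 ! k}. z k) \<le> - real (card {k. k < n \<and> c1 ! k})"
proof -
  define A where "A = {k. k < n \<and> c1 ! k}"
  have fA: "finite A" and An: "A \<subseteq> {..<n}" by (auto simp: A_def)
  have s0: "k < n \<Longrightarrow> bpsk (replicate n False) k = 1" for k by (simp add: bpsk_def)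
  have e1: "sqdist n (\<lambda>k. bpsk (replicate n False) k + z k) (bpsk c1)
      = (\<Sum>k<n. (z k)\<^sup>2) + (\<Sum>k<n. if k \<in> A then 4 * z k + 4 else 0)"
  proof -
    have "sqdist n (\<lambda>k. bpsk (replicate n False) k + z k) (bpsk c1)
        = (\<Sum>k<n. (z k)\<^sup>2 + (if k \<in> A then 4 * z k + 4 else 0))"
      unfolding sqdist_def
      by (intro sum.cong refl) (auto simp: s0 A_def bpsk_def power2_eq_square algebra_simps)
    then show ?thesis by (simp add: sum.distrib)
  qed
  have e2: "sqdist n (\<lambda>k. bpsk (replicate n False) k + z k) (bpsk (replicate n False)) = (\<Sum>k<n. (z k)\<^sup>2)"
    unfolding sqdist_def by (intro sum.cong refl) (simp add: s0)
  have e3: "(\<Sum>k<n. if k \<in> A then 4 * z k + 4 else (0::real)) = 4 * (\<Sum>k\<in>A. z k) + 4 * real (card A)"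
  proof -
    have "(\<Sum>k<n. if k \<in> A then 4 * z k + 4 else (0::real)) = (\<Sum>k\<in>{..<n} \<inter> A. 4 * z k + 4)"
      by (rule sum.inter_restrict[symmetric]) simp
    also have "{..<n} \<inter> A = A" using An by auto
    finally show ?thesis by (simp add: sum.distrib sum_distrib_left)
  qed
  show ?thesis
    unfolding pw_error_def real_sqrt_le_iff e1 e2 e3 A_def[symmetric] by linarith
qed


theorem lemma1:
  fixes n :: nat and C :: "bool list set" and c1 c :: "bool list"
    and \<sigma> \<theta> :: real
  assumes code: "binary_linear_code n C"
    and c1C: "c1 \<in> C" and cC: "c \<in> C"
    and dist01: "c1 \<noteq> replicate n False" and dist0: "c \<noteq> replicate n False"
    and dist1: "c \<noteq> c1"
    and sigma: "\<sigma> > 0"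
    and theta: "0 \<le> \<theta>" "\<theta> \<le> pi"
    and cos_theta: "cos \<theta> = (real (hamming_weight c1) + real (hamming_weight c)
                      - real (hamming_weight (gf2_diff c c1)))
                     / (2 * sqrt (real (hamming_weight c1) * real (hamming_weight c)))"
  shows "measure (awgn_noise n \<sigma>)
           {z \<in> space (awgn_noise n \<sigma>).
              let s0 = bpsk (replicate n False); y = (\<lambda>k. s0 k + z k) in
              pw_error n s0 (bpsk c1) y \<or> pw_error n s0 (bpsk c) y}
         = 1 - integral\<^sup>L lborel
               (\<lambda>\<xi>::real \<times> real.
                  indicator {(\<xi>1, \<xi>2). \<xi>1 < sqrt (real (hamming_weight c1)) \<and>
                                      \<xi>1 * cos \<theta> + \<xi>2 * sin \<theta> < sqrt (real (hamming_weight c))} \<xi>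
                  * gauss_pdf \<sigma> (fst \<xi>) * gauss_pdf \<sigma> (snd \<xi>))"
proof -
  have len1: "length c1 = n" and len: "length c = n"
    using code c1C cC by (auto simp: binary_linear_code_def)
  define A where "A = {k. k < n \<and> c1 ! k}"
  define B where "B = {k. k < n \<and> c ! k}"
  define S1 where "S1 = A \<inter> B"
  define S2 where "S2 = A - B"
  define S3 where "S3 = B - A"
  define a where "a = card S1"
  define b where "b = card S2"
  define w where "w = card S3"
  have An: "A \<subseteq> {..<n}" and Bn: "B \<subseteq> {..<n}" by (auto simp: A_def B_def)
  have fA: "finite A" and fB: "finite B" by (auto simp: A_def B_def)
  have S1n: "S1 \<subseteq> {..<n}" and S2n: "S2 \<subseteq> {..<n}" and S3n: "S3 \<subseteq> {..<n}"
    using An Bn by (auto simp: S1_def S2_def S3_def)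
  have fS: "finite S1" "finite S2" "finite S3" using fA fB by (auto simp: S1_def S2_def S3_def)
  have AS: "A = S1 \<union> S2" and BS: "B = S1 \<union> S3" by (auto simp: S1_def S2_def S3_def)
  have dj: "S1 \<inter> S2 = {}" "S1 \<inter> S3 = {}" "S2 \<inter> S3 = {}" by (auto simp: S1_def S2_def S3_def)
  have cA: "card A = a + b" unfolding AS a_def b_def by (rule card_Un_disjoint) (use fS dj in auto)
  have cB: "card B = a + w" unfolding BS a_def w_def by (rule card_Un_disjoint) (use fS dj in auto)
  have hw1: "hamming_weight c1 = a + b" using cA by (simp add: hamming_weight_def len1 A_def)
  have hw: "hamming_weight c = a + w" using cB by (simp add: hamming_weight_def len B_def)
  have hwd: "hamming_weight (gf2_diff c c1) = b + w"
  proof -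
    have "{k. k < length (gf2_diff c c1) \<and> gf2_diff c c1 ! k} = S2 \<union> S3"
      by (auto simp: gf2_diff_def len len1 S2_def S3_def A_def B_def)
    moreover have "card (S2 \<union> S3) = b + w" unfolding b_def w_def
      by (rule card_Un_disjoint) (use fS dj in auto)
    ultimately show ?thesis by (simp add: hamming_weight_def)
  qed
  have Ane: "a + b > 0"
  proof (rule ccontr)
    assume "\<not> 0 < a + b"
    then have "A = {}" using cA fA by simp
    then have "c1 = replicate n False"
      by (intro nth_equalityI) (auto simp: len1 A_def)
    then show False using dist01 by simp
  qed
  have Bne: "a + w > 0"
  proof (rule ccontr)
    assume "\<not> 0 < a + w"
    then have "B = {}" using cB fB by simp
    then have "c = replicate n False"
      by (intro nth_equalityI) (auto simp: len B_def)
    then show False using dist0 by simp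
  qed
  have cosv: "cos \<theta> = real a / sqrt (real (a + b) * real (a + w))"
  proof -
    have "real (a + b) + real (a + w) - real (b + w) = 2 * real a" by simp
    then show ?thesis using cos_theta by (simp add: hw1 hw hwd)
  qed
  have sin0: "sin \<theta> \<ge> 0" using theta by (rule sin_ge_zero)
  have sin2: "(sin \<theta>)\<^sup>2 = 1 - (cos \<theta>)\<^sup>2" by (rule sin_squared_eq)
  define v where "v = \<sigma>\<^sup>2"
  have vp: "v > 0" using sigma by (simp add: v_def)
  have sv: "sqrt v = \<sigma>" using sigma by (simp add: v_def)
  have M: "awgn_noise n \<sigma> = PG {..<n} v"
    unfolding awgn_noise_def gmeas_def using vp sv by simp
  have [measurable]: "(\<lambda>z. \<Sum>k\<in>A. z k) \<in> borel_measurable (PG {..<n} v)"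
    using An by (rule meas_sum_PG)
  have [measurable]: "(\<lambda>z. \<Sum>k\<in>B. z k) \<in> borel_measurable (PG {..<n} v)"
    using Bn by (rule meas_sum_PG)
  define F where "F = {z \<in> space (PG {..<n} v). (\<Sum>k\<in>A. z k) > - real (a + b) \<and> (\<Sum>k\<in>B. z k) > - real (a + w)}"
  have Fm: "F \<in> sets (PG {..<n} v)" unfolding F_def by measurable
  have ev: "{z \<in> space (awgn_noise n \<sigma>).
              let s0 = bpsk (replicate n False); y = (\<lambda>k. s0 k + z k) in
              pw_error n s0 (bpsk c1) y \<or> pw_error n s0 (bpsk c) y}
          = space (PG {..<n} v) - F"
    unfolding M F_def Let_def pw_error_iff[OF len1] pw_error_iff[OF len]
      A_def[symmetric] B_def[symmetric] cA cB
    by auto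
  interpret P: prob_space "PG {..<n} v" by (rule prob_space_PG)
  have LHS: "measure (awgn_noise n \<sigma>)
           {z \<in> space (awgn_noise n \<sigma>).
              let s0 = bpsk (replicate n False); y = (\<lambda>k. s0 k + z k) in
              pw_error n s0 (bpsk c1) y \<or> pw_error n s0 (bpsk c) y}
      = 1 - enn2real (emeasure (PG {..<n} v) F)"
    unfolding ev using P.prob_compl[OF Fm] by (simp add: M measure_def)
  define R where "R = (\<integral>\<^sup>+x. \<integral>\<^sup>+y. indicator {x. x < sqrt (real (a + b))} x *
          indicator {z. z < sqrt (real (a + w))} (x * cos \<theta> + y * sin \<theta>) \<partial>gmeas v \<partial>gmeas v)"
  have FR: "emeasure (PG {..<n} v) F = R"
  proof -
    define h where "h u p q = (indicator {x. x > - real (a + b)} (u + p) * indicator {x. x > - real (a + w)} (u + q) :: ennreal)" for u p q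
    have hm: "(\<lambda>(u, p, q). h u p q) \<in> borel_measurable (borel \<Otimes>\<^sub>M (borel \<Otimes>\<^sub>M borel))"
      unfolding h_def by measurable
    have "emeasure (PG {..<n} v) F = (\<integral>\<^sup>+z. indicator F z \<partial>PG {..<n} v)"
      using Fm by simp
    also have "\<dots> = (\<integral>\<^sup>+z. h (\<Sum>k\<in>S1. z k) (\<Sum>k\<in>S2. z k) (\<Sum>k\<in>S3. z k) \<partial>PG {..<n} v)"
    proof (rule nn_integral_cong)
      fix z assume z: "z \<in> space (PG {..<n} v)"
      have "(\<Sum>k\<in>A. z k) = (\<Sum>k\<in>S1. z k) + (\<Sum>k\<in>S2. z k)"
        unfolding AS by (rule sum.union_disjoint) (use fS dj in auto)
      moreover have "(\<Sum>k\<in>B. z k) = (\<Sum>k\<in>S1. z k) + (\<Sum>k\<in>S3. z k)"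
        unfolding BS by (rule sum.union_disjoint) (use fS dj in auto)
      ultimately show "indicator F z = h (\<Sum>k\<in>S1. z k) (\<Sum>k\<in>S2. z k) (\<Sum>k\<in>S3. z k)"
        using z by (simp add: F_def h_def indicator_def)
    qed
    also have "\<dots> = (\<integral>\<^sup>+u. \<integral>\<^sup>+p. \<integral>\<^sup>+q. h u p q \<partial>gmeas (real w * v) \<partial>gmeas (real b * v) \<partial>gmeas (real a * v))"
      using triplelaw[OF _ S1n S2n S3n dj _ hm] vp by (simp add: a_def b_def w_def)
    also have "\<dots> = R"
      unfolding h_def R_def
      by (rule core[OF Ane Bne vp cosv sin0 sin2])
    finally show ?thesis .
  qed
  have RHS: "integral\<^sup>L lborel
               (\<lambda>\<xi>::real \<times> real.
                  indicator {(\<xi>1, \<xi>2). \<xi>1 < sqrt (real (hamming_weight c1)) \<and>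
                                      \<xi>1 * cos \<theta> + \<xi>2 * sin \<theta> < sqrt (real (hamming_weight c))} \<xi>
                  * gauss_pdf \<sigma> (fst \<xi>) * gauss_pdf \<sigma> (snd \<xi>)) = enn2real R"
  proof -
    define \<Omega> where "\<Omega> = {(\<xi>1, \<xi>2). \<xi>1 < sqrt (real (a + b)) \<and> \<xi>1 * cos \<theta> + \<xi>2 * sin \<theta> < sqrt (real (a + w))}"
    have gp: "gauss_pdf \<sigma> x = normal_density 0 (sqrt v) x" for x
      using sigma by (simp add: gauss_pdf_def normal_density_def sv v_def real_sqrt_mult)
    have "open \<Omega>"
    proof -
      have "\<Omega> = {p. fst p < sqrt (real (a + b))} \<inter> {p. fst p * cos \<theta> + snd p * sin \<theta> < sqrt (real (a + w))}"
        by (auto simp: \<Omega>_def)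
      moreover have "open {p::real\<times>real. fst p < sqrt (real (a + b))}"
        by (intro open_Collect_less continuous_intros)
      moreover have "open {p::real\<times>real. fst p * cos \<theta> + snd p * sin \<theta> < sqrt (real (a + w))}"
        by (intro open_Collect_less continuous_intros)
      ultimately show ?thesis by auto
    qed
    then have [measurable]: "\<Omega> \<in> sets borel" by (rule borel_open)
    have gm[measurable]: "gauss_pdf \<sigma> \<in> borel_measurable borel" unfolding gp[abs_def] by simp
    have O2[measurable]: "\<Omega> \<in> sets (borel \<Otimes>\<^sub>M borel)" unfolding borel_prod by fact
    have mf: "(\<lambda>\<xi>::real \<times> real. indicator \<Omega> \<xi> * gauss_pdf \<sigma> (fst \<xi>) * gauss_pdf \<sigma> (snd \<xi>)) \<in> borel_measurable (borel \<Otimes>\<^sub>M borel)"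
      by measurable
    have eqs: "sets (lborel \<Otimes>\<^sub>M lborel) = sets ((borel::real measure) \<Otimes>\<^sub>M borel)"
      by (intro sets_pair_measure_cong) simp_all
    have mf2: "(\<lambda>\<xi>::real \<times> real. ennreal (indicator \<Omega> \<xi> * gauss_pdf \<sigma> (fst \<xi>) * gauss_pdf \<sigma> (snd \<xi>))) \<in> borel_measurable (lborel \<Otimes>\<^sub>M lborel)"
      unfolding measurable_cong_sets[OF eqs refl] using mf by measurable
    have "integral\<^sup>L lborel (\<lambda>\<xi>::real \<times> real. indicator \<Omega> \<xi> * gauss_pdf \<sigma> (fst \<xi>) * gauss_pdf \<sigma> (snd \<xi>))
        = enn2real (\<integral>\<^sup>+\<xi>. ennreal (indicator \<Omega> \<xi> * gauss_pdf \<sigma> (fst \<xi>) * gauss_pdf \<sigma> (snd \<xi>)) \<partial>lborel)"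
    proof (rule integral_eq_nn_integral)
      show "(\<lambda>\<xi>::real \<times> real. indicator \<Omega> \<xi> * gauss_pdf \<sigma> (fst \<xi>) * gauss_pdf \<sigma> (snd \<xi>)) \<in> borel_measurable lborel"
        using mf unfolding borel_prod by simp
    qed (auto simp: gp)
    also have "(\<integral>\<^sup>+\<xi>. ennreal (indicator \<Omega> \<xi> * gauss_pdf \<sigma> (fst \<xi>) * gauss_pdf \<sigma> (snd \<xi>)) \<partial>(lborel::(real \<times> real) measure))
        = (\<integral>\<^sup>+x. \<integral>\<^sup>+y. ennreal (indicator \<Omega> (x, y) * gauss_pdf \<sigma> x * gauss_pdf \<sigma> y) \<partial>lborel \<partial>lborel)"
      by (subst lborel_prod[symmetric], subst lborel.nn_integral_fst[symmetric]) (simp_all add: mf2)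
    also have "\<dots> = R"
    proof -
      have "(\<integral>\<^sup>+x. \<integral>\<^sup>+y. ennreal (indicator \<Omega> (x, y) * gauss_pdf \<sigma> x * gauss_pdf \<sigma> y) \<partial>lborel \<partial>lborel)
          = (\<integral>\<^sup>+x. ennreal (normal_density 0 (sqrt v) x) * (\<integral>\<^sup>+y. ennreal (normal_density 0 (sqrt v) y) *
              (indicator {x. x < sqrt (real (a + b))} x *
               indicator {z. z < sqrt (real (a + w))} (x * cos \<theta> + y * sin \<theta>)) \<partial>lborel) \<partial>lborel)"
      proof (rule nn_integral_cong)
        fix x
        have "ennreal (indicator \<Omega> (x, y) * gauss_pdf \<sigma> x * gauss_pdf \<sigma> y)
            = ennreal (normal_density 0 (sqrt v) x) * (ennreal (normal_density 0 (sqrt v) y) *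
              (indicator {x. x < sqrt (real (a + b))} x *
               indicator {z. z < sqrt (real (a + w))} (x * cos \<theta> + y * sin \<theta>)))" for y
          by (simp add: gp \<Omega>_def indicator_def ennreal_mult'[symmetric] mult.commute)
        then show "(\<integral>\<^sup>+y. ennreal (indicator \<Omega> (x, y) * gauss_pdf \<sigma> x * gauss_pdf \<sigma> y) \<partial>lborel)
          = ennreal (normal_density 0 (sqrt v) x) * (\<integral>\<^sup>+y. ennreal (normal_density 0 (sqrt v) y) *
              (indicator {x. x < sqrt (real (a + b))} x *
               indicator {z. z < sqrt (real (a + w))} (x * cos \<theta> + y * sin \<theta>)) \<partial>lborel)"
          by (simp add: nn_integral_cmult)
      qed
      also have "\<dots> = R"
        unfolding R_def using vp by (simp add: nn_integral_gmeas_pos)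
      finally show ?thesis .
    qed
    finally show ?thesis by (simp add: \<Omega>_def hw1 hw)
  qed
  show ?thesis using LHS FR RHS by simp
qed

end
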